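(* Let $R$ be the ring of integers of a finite extension of $\mathbb Q_p$, let $\nu\in\Lambda^{\mathrm{dig}}_{R,1}$, and let $f_\nu(T)\in R[[T]]$ be the Amice transform of $d_{\infty,1}(\nu)$. Then: (1) $\nu(\mathbf 1)$ is a unit of $R$ if and only if $\mu(f_\nu)=\lambda(f_\nu)=0$; (2) $\nu(\mathbf 1)$ is not a unit of $R$ and $D\nu$ is a unit of $R$ if and only if $\mu(f_\nu)=0$ and $\lambda(f_\nu)=1$.
   Context: $\Lambda^{\mathrm{dig}}_{R,1}=\varprojlim_nR[(\mathbb Z/p)^n]$ is the algebra of $R$-valued measures on $(\mathbb Z/p)^{\mathbb N}$. The digit map $d_{\infty,1}:(\mathbb Z/p)^{\mathbb N}\to\mathbb Z_p$, $(a_i)\mapsto\sum_{i\ge1}\tilde a_ip^{i-1}$ ($\tilde a_i\in\{0,\ldots,p-1\}$), induces by pushforward an $R$-module isomorphism $\Lambda^{\mathrm{dig}}_{R,1}\to R[[\mathbb Z_p]]$. The Amice transform sends $\mu\in R[[\mathbb Z_p]]$ to $\sum_{k\ge0}\mu(\binom{x}{k})T^k$. $\nu(\mathbf 1)$ is the total mass of $\nu$; $D\nu=\sum_{a=1}^{p}a\,\nu(\mathbf 1_{\pi_1^{-1}\{a\}})$ where $\pi_1$ is projection to the first factor $\mathbb Z/p$. Weierstrass invariants: with $\pi$ a uniformizer of $R$, a nonzero $f\in R[[T]]$ factors uniquely as $\pi^{\mu(f)}g(T)u(T)$ with $u\in R[[T]]^\times$ and $g$ monic of degree $\lambda(f)$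 with non-leading coefficients in $(\pi)$; for $f=0$, $\mu(f)=\infty$, $\lambda(f)=0$. *)

theory Defs
  imports "HOL-Computational_Algebra.Polynomial_FPS" "HOL-Library.Extended_Nat"
begin

definition padic_lim :: "'r::comm_ring_1 \<Rightarrow> (nat \<Rightarrow> 'r) \<Rightarrow> 'r \<Rightarrow> bool" where
  "padic_lim \<pi> s l \<longleftrightarrow> (\<forall>m. \<exists>N. \<forall>n\<ge>N. \<pi> ^ m dvd (s n - l))"

text \<open>R (the type) is the ring of integers of a finite extension of Q_p with uniformizer pi:
  a discrete valuation ring of characteristic 0 (type class) with uniformizer pi,
  complete for the pi-adic topology, with finite residue field of characteristic p.\<close>
definition padic_int_ring :: "nat \<Rightarrow> 'r::{idom,ring_char_0} \<Rightarrow> bool" where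
  "padic_int_ring p \<pi> \<longleftrightarrow>
     prime p \<and> \<pi> \<noteq> 0 \<and> \<not> \<pi> dvd 1 \<and>
     (\<forall>x. x \<noteq> 0 \<longrightarrow> (\<exists>u n. u dvd 1 \<and> x = u * \<pi> ^ n)) \<and>
     (\<forall>s. (\<forall>m. \<exists>N. \<forall>i\<ge>N. \<forall>j\<ge>N. \<pi> ^ m dvd (s i - s j)) \<longrightarrow> (\<exists>l. padic_lim \<pi> s l)) \<and>
     (\<exists>S. finite S \<and> (\<forall>x. \<exists>y\<in>S. \<pi> dvd (x - y))) \<and>
     \<pi> dvd of_nat p"

text \<open>An element of (Z/p)^n is a list of length n with entries in {0..<p};
  its first entry is the first coordinate.\<close>
definition digit_lists :: "nat \<Rightarrow> nat \<Rightarrow> nat list set" where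
  "digit_lists p n = {a. length a = n \<and> set a \<subseteq> {..<p}}"

text \<open>An element of the inverse limit of R[(Z/p)^n]: a family of functions on (Z/p)^n
  compatible under the projections (Z/p)^(n+1) -> (Z/p)^n forgetting the last coordinate.\<close>
definition is_dig_measure :: "nat \<Rightarrow> (nat list \<Rightarrow> 'r::comm_ring_1) \<Rightarrow> bool" where
  "is_dig_measure p \<nu> \<longleftrightarrow> (\<forall>a \<in> (\<Union>n. digit_lists p n). \<nu> a = (\<Sum>b<p. \<nu> (a @ [b])))"

definition total_mass :: "(nat list \<Rightarrow> 'r::comm_ring_1) \<Rightarrow> 'r" where
  "total_mass \<nu> = \<nu> []"

text \<open>D nu = sum_{a=1}^{p} a * nu(pi_1^{-1}{a}), where a is read in Z/p (so a = p means 0).\<close>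
definition dig_D :: "nat \<Rightarrow> (nat list \<Rightarrow> 'r::comm_ring_1) \<Rightarrow> 'r" where
  "dig_D p \<nu> = (\<Sum>a\<in>{1..p}. of_nat a * \<nu> [a mod p])"

text \<open>Digit value sum_i a_i p^(i-1) (1-based), here 0-based indexing.\<close>
definition digval :: "nat \<Rightarrow> nat list \<Rightarrow> nat" where
  "digval p a = (\<Sum>i<length a. a ! i * p ^ i)"

text \<open>Pushforward along d_{infty,1}: the measure on Z_p as the compatible family
  mu_n on Z/p^n = {0..<p^n}.\<close>
definition dig_push :: "nat \<Rightarrow> (nat list \<Rightarrow> 'r::comm_ring_1) \<Rightarrow> nat \<Rightarrow> nat \<Rightarrow> 'r" where
  "dig_push p \<nu> n c = (\<Sum>a\<in>{a \<in> digit_lists p n. digval p a = c}. \<nu> a)"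

text \<open>Integral of the continuous function binom(x,k) against a measure mu on Z_p,
  as pi-adic limit of Riemann sums; the Amice transform.\<close>
definition amice_coeff :: "'r::comm_ring_1 \<Rightarrow> nat \<Rightarrow> (nat \<Rightarrow> nat \<Rightarrow> 'r) \<Rightarrow> nat \<Rightarrow> 'r" where
  "amice_coeff \<pi> p \<mu> k =
     (THE l. padic_lim \<pi> (\<lambda>n. \<Sum>c<p ^ n. \<mu> n c * of_nat (c choose k)) l)"

definition amice :: "'r::comm_ring_1 \<Rightarrow> nat \<Rightarrow> (nat \<Rightarrow> nat \<Rightarrow> 'r) \<Rightarrow> 'r fps" where
  "amice \<pi> p \<mu> = Abs_fps (amice_coeff \<pi> p \<mu>)"

definition weier_fact :: "'r::comm_ring_1 \<Rightarrow> 'r fps \<Rightarrow> nat \<Rightarrow> nat \<Rightarrow> bool" where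
  "weier_fact \<pi> f m l \<longleftrightarrow>
     (\<exists>g u. degree g = l \<and> lead_coeff g = 1 \<and> (\<forall>i<l. \<pi> dvd coeff g i) \<and>
            u dvd 1 \<and> f = fps_const (\<pi> ^ m) * fps_of_poly g * u)"

definition weier_mu :: "'r::comm_ring_1 \<Rightarrow> 'r fps \<Rightarrow> enat" where
  "weier_mu \<pi> f = (if f = 0 then \<infinity> else enat (THE m. \<exists>l. weier_fact \<pi> f m l))"

definition weier_lambda :: "'r::comm_ring_1 \<Rightarrow> 'r fps \<Rightarrow> nat" where
  "weier_lambda \<pi> f = (if f = 0 then 0 else (THE l. \<exists>m. weier_fact \<pi> f m l))"

end

theory Submission
  imports Defs
begin

function invc :: "'a::comm_ring_1 fps \<Rightarrow> 'a \<Rightarrow> nat \<Rightarrow> 'a" where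
  "invc f c n = (if n = 0 then c else - c * (\<Sum>i\<in>{1..n}. fps_nth f i * invc f c (n - i)))"
  by auto
termination by (relation "measure (\<lambda>(f,c,n). n)") auto

declare invc.simps[simp del]

lemma fps_unit_inv:
  fixes f :: "'a::comm_ring_1 fps"
  assumes "fps_nth f 0 * c = 1"
  shows "f * Abs_fps (invc f c) = 1"
proof (rule fps_ext)
  fix n
  show "fps_nth (f * Abs_fps (invc f c)) n = fps_nth 1 n"
  proof (cases "n = 0")
    case True then show ?thesis using assms by (simp add: fps_mult_nth invc.simps)
  next
    case False
    have "fps_nth (f * Abs_fps (invc f c)) n = (\<Sum>i=0..n. fps_nth f i * invc f c (n - i))"
      by (simp add: fps_mult_nth)
    also have "\<dots> = fps_nth f 0 * invc f c n + (\<Sum>i\<in>{1..n}. fps_nth f i * invc f c (n - i))"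
      by (simp add: sum.atLeast_Suc_atMost)
    also have "fps_nth f 0 * invc f c n = - (fps_nth f 0 * c) * (\<Sum>i\<in>{1..n}. fps_nth f i * invc f c (n - i))"
      using False by (subst invc.simps) (simp add: algebra_simps)
    finally show ?thesis using False assms by simp
  qed
qed

lemma fps_unit_ex:
  fixes f :: "'a::comm_ring_1 fps"
  assumes "fps_nth f 0 dvd 1" shows "f dvd 1"
proof -
  obtain c where "1 = fps_nth f 0 * c" using assms by (auto elim: dvdE)
  then have "f * Abs_fps (invc f c) = 1" using fps_unit_inv by metis
  then show ?thesis by (metis dvdI)
qed

lemma fps_unit_nth0:
  fixes f :: "'a::comm_ring_1 fps"
  assumes "f dvd 1" shows "fps_nth f 0 dvd 1"
proof -
  obtain g where "1 = f * g" using assms by (auto elim: dvdE)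
  then have "fps_nth (f*g) 0 = 1" by (metis fps_one_nth)
  then show ?thesis by (simp add: fps_mult_nth) (metis dvdI)
qed


lemma R_nonunit: "padic_int_ring p \<pi> \<Longrightarrow> \<not> \<pi> dvd 1" by (simp add: padic_int_ring_def)
lemma R_nz: "padic_int_ring p \<pi> \<Longrightarrow> \<pi> \<noteq> 0" by (simp add: padic_int_ring_def)

lemma R_unit:
  fixes \<pi> :: "'r::{idom,ring_char_0}"
  assumes R: "padic_int_ring p \<pi>" and nd: "\<not> \<pi> dvd x"
  shows "x dvd 1"
proof -
  have "x \<noteq> 0" using nd by auto
  then obtain u n where u: "u dvd 1" "x = u * \<pi> ^ n" using R unfolding padic_int_ring_def by blast
  show ?thesis
  proof (cases n)
    case 0 then show ?thesis using u by simp
  next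
    case (Suc k) then have "\<pi> dvd x" using u by simp
    then show ?thesis using nd by simp
  qed
qed

lemma R_zero:
  fixes \<pi> :: "'r::{idom,ring_char_0}"
  assumes R: "padic_int_ring p \<pi>" and d: "\<And>m. \<pi> ^ m dvd x"
  shows "x = 0"
proof (rule ccontr)
  assume "x \<noteq> 0"
  then obtain u n where u: "u dvd 1" "x = u * \<pi> ^ n" using R unfolding padic_int_ring_def by blast
  obtain k where "x = \<pi> ^ Suc n * k" using d[of "Suc n"] by (auto elim: dvdE)
  then have "u * \<pi> ^ n = (\<pi> * k) * \<pi> ^ n" using u by (simp add: algebra_simps)
  then have "u = \<pi> * k" using R_nz[OF R] by simp
  then have "\<pi> dvd 1" using u(1) by (metis dvd_triv_left dvd_trans)
  then show False using R_nonunit[OF R] by simp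
qed

lemma R_one_minus:
  fixes \<pi> :: "'r::{idom,ring_char_0}"
  assumes R: "padic_int_ring p \<pi>" and "u dvd 1"
  shows "(u - \<pi> * y) dvd 1"
proof (rule R_unit[OF R])
  show "\<not> \<pi> dvd u - \<pi> * y"
  proof
    assume "\<pi> dvd u - \<pi> * y"
    then have "\<pi> dvd (u - \<pi> * y) + \<pi> * y" by (intro dvd_add) auto
    then have "\<pi> dvd u" by simp
    then show False using assms R_nonunit[OF R] dvd_trans by blast
  qed
qed

lemma pow_cancel_dvd:
  fixes \<pi> :: "'r::idom"
  assumes "\<pi> \<noteq> 0" "\<pi> ^ (m + k) dvd \<pi> ^ m * x" shows "\<pi> ^ k dvd x"
  using assms by (simp add: power_add mult.commute[of "\<pi>^m"])

definition pd :: "'a::comm_ring_1 \<Rightarrow> 'a fps \<Rightarrow> bool" where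
  "pd c h \<longleftrightarrow> (\<forall>i. c dvd fps_nth h i)"

lemma pd_mult_left: "pd c a \<Longrightarrow> pd c (b * a)"
  unfolding pd_def by (auto simp: fps_mult_nth intro!: dvd_sum)
lemma pd_mult_right: "pd c a \<Longrightarrow> pd c (a * b)"
  using pd_mult_left[of c a b] by (simp add: mult.commute)
lemma pd_mult2: "pd c a \<Longrightarrow> pd d b \<Longrightarrow> pd (c * d) (a * b)"
  unfolding pd_def by (auto simp: fps_mult_nth intro!: dvd_sum mult_dvd_mono)
lemma pd_diff: "pd c a \<Longrightarrow> pd c b \<Longrightarrow> pd c (a - b)"
  unfolding pd_def by auto
lemma pd_add: "pd c a \<Longrightarrow> pd c b \<Longrightarrow> pd c (a + b)"
  unfolding pd_def by auto
lemma pd_minus: "pd c a \<Longrightarrow> pd c (- a)"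
  unfolding pd_def by auto
lemma pd_shift: "pd c a \<Longrightarrow> pd c (fps_shift l a)"
  unfolding pd_def by auto
lemma pd_weaken: "c' dvd c \<Longrightarrow> pd c a \<Longrightarrow> pd c' a"
  unfolding pd_def by (auto intro: dvd_trans)
lemma pd_one[simp]: "pd 1 a" unfolding pd_def by auto
lemma pd_zero[simp]: "pd c 0" unfolding pd_def by auto

lemma pd_R_zero:
  fixes \<pi> :: "'r::{idom,ring_char_0}"
  assumes R: "padic_int_ring p \<pi>" and "\<And>m. pd (\<pi> ^ m) h" shows "h = 0"
  using assms R_zero[OF R] unfolding pd_def by (intro fps_ext) auto


lemma weier_char:
  fixes \<pi> :: "'r::{idom,ring_char_0}"
  assumes R: "padic_int_ring p \<pi>" and W: "weier_fact \<pi> f m l"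
  shows "(\<forall>i. \<pi> ^ m dvd fps_nth f i) \<and> \<not> \<pi> ^ (m+1) dvd fps_nth f l \<and> (\<forall>i<l. \<pi> ^ (m+1) dvd fps_nth f i)"
proof -
  obtain g u where g: "degree g = l" "lead_coeff g = 1" "\<forall>i<l. \<pi> dvd coeff g i"
     and u: "u dvd 1" and f: "f = fps_const (\<pi> ^ m) * fps_of_poly g * u"
    using W unfolding weier_fact_def by blast
  define h where "h = fps_of_poly g * u"
  have fh: "\<And>i. fps_nth f i = \<pi> ^ m * fps_nth h i"
    unfolding f h_def by (simp add: mult.assoc)
  have hlow: "\<pi> dvd fps_nth h i" if "i < l" for i
    unfolding h_def fps_mult_nth using that g(3) by (auto intro!: dvd_sum dvd_mult2)
  have u0: "fps_nth u 0 dvd 1" using fps_unit_nth0[OF u] .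
  have "fps_nth h l = (\<Sum>j<l. coeff g j * fps_nth u (l - j)) + coeff g l * fps_nth u 0"
    unfolding h_def fps_mult_nth by (simp add: atLeast0AtMost lessThan_Suc_atMost[symmetric])
  moreover have "\<pi> dvd (\<Sum>j<l. coeff g j * fps_nth u (l - j))"
    using g(3) by (auto intro!: dvd_sum dvd_mult2)
  moreover have "coeff g l = 1" using g by simp
  ultimately obtain y where hl: "fps_nth h l = fps_nth u 0 - \<pi> * (- y)"
    by (auto elim!: dvdE)
  have "\<not> \<pi> dvd fps_nth h l"
  proof
    assume "\<pi> dvd fps_nth h l"
    moreover have "fps_nth h l dvd 1" unfolding hl by (rule R_one_minus[OF R u0])
    ultimately show False using R_nonunit[OF R] dvd_trans by blast
  qed
  then have "\<not> \<pi> ^ (m+1) dvd fps_nth f l"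
    using pow_cancel_dvd[OF R_nz[OF R], of m 1 "fps_nth h l"] fh[of l] by (metis power_one_right)
  moreover have "\<forall>i<l. \<pi> ^ (m+1) dvd fps_nth f i"
    using hlow fh by (auto simp: mult_dvd_mono)
  ultimately show ?thesis using fh by auto
qed

lemma weier_unique:
  fixes \<pi> :: "'r::{idom,ring_char_0}"
  assumes R: "padic_int_ring p \<pi>" and W1: "weier_fact \<pi> f m l" and W2: "weier_fact \<pi> f m' l'"
  shows "m = m' \<and> l = l'"
proof -
  note c1 = weier_char[OF R W1] and c2 = weier_char[OF R W2]
  have mm: "m = m'"
  proof (rule ccontr)
    assume "m \<noteq> m'"
    then consider "m + 1 \<le> m'" | "m' + 1 \<le> m" by linarith
    then show False
    proof cases
      case 1 then have "\<pi> ^ (m+1) dvd fps_nth f l" using c2 le_imp_power_dvd dvd_trans by blast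
      then show False using c1 by blast
    next
      case 2 then have "\<pi> ^ (m'+1) dvd fps_nth f l'" using c1 le_imp_power_dvd dvd_trans by blast
      then show False using c2 by blast
    qed
  qed
  moreover have "l = l'"
  proof (rule ccontr)
    assume "l \<noteq> l'"
    then consider "l < l'" | "l' < l" by linarith
    then show False
      by cases (use c1 c2 mm in blast)+
  qed
  ultimately show ?thesis by simp
qed

lemma weier_values:
  fixes \<pi> :: "'r::{idom,ring_char_0}"
  assumes R: "padic_int_ring p \<pi>" and W: "weier_fact \<pi> f m l" and nz: "f \<noteq> 0"
  shows "weier_mu \<pi> f = enat m" "weier_lambda \<pi> f = l"
proof -
  have "(THE m. \<exists>l. weier_fact \<pi> f m l) = m"
    by (rule the_equality) (use W weier_unique[OF R W] in blast)+
  then show "weier_mu \<pi> f = enat m" using nz by (simp add: weier_mu_def)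
  have "(THE l. \<exists>m. weier_fact \<pi> f m l) = l"
    by (rule the_equality) (use W weier_unique[OF R W] in blast)+
  then show "weier_lambda \<pi> f = l" using nz by (simp add: weier_lambda_def)
qed


lemma weier_prep:
  fixes \<pi> :: "'r::{idom,ring_char_0}" and F :: "'r fps"
  assumes R: "padic_int_ring p \<pi>" and low: "\<And>i. i < l \<Longrightarrow> \<pi> dvd fps_nth F i"
    and unit: "fps_nth F l dvd 1"
  shows "\<exists>g u. degree g = l \<and> lead_coeff g = 1 \<and> (\<forall>i<l. \<pi> dvd coeff g i) \<and>
            u dvd 1 \<and> F = fps_of_poly g * u"
proof -
  define P where "P = fps_cutoff l F"
  define U where "U = fps_shift l F"
  have FPU: "F = P + U * fps_X ^ l"
    unfolding P_def U_def by (rule fps_ext) (simp add: fps_X_power_mult_right_nth)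
  have pdP: "pd \<pi> P" unfolding pd_def P_def using low by simp
  have "U dvd 1" using unit by (intro fps_unit_ex) (simp add: U_def)
  then obtain V where "1 = U * V" by (rule dvdE)
  then have UV: "U * V = 1" by simp
  define \<Psi> where "\<Psi> = (\<lambda>q. V * (1 - fps_shift l (q * P)))"
  have psi_diff: "pd (c * \<pi>) (\<Psi> a - \<Psi> b)" if "pd c (a - b)" for a b c
  proof -
    have sh: "fps_shift l ((a - b) * P) = fps_shift l (a*P) - fps_shift l (b*P)"
      by (simp add: left_diff_distrib fps_shift_diff)
    have "\<Psi> a - \<Psi> b = V * (- fps_shift l ((a - b) * P))"
      unfolding \<Psi>_def sh by (simp add: right_diff_distrib)
    moreover have "pd (c * \<pi>) ((a - b) * P)" using pd_mult2[OF that pdP] .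
    ultimately show ?thesis by (simp add: pd_mult_left pd_minus pd_shift)
  qed
  define qs where "qs = (\<lambda>k. (\<Psi> ^^ k) 0)"
  have qsS: "qs (Suc k) = \<Psi> (qs k)" for k unfolding qs_def by simp
  have step: "pd (\<pi> ^ k) (qs (Suc k) - qs k)" for k
  proof (induction k)
    case 0 show ?case by simp
  next
    case (Suc k)
    have "pd (\<pi> ^ k * \<pi>) (\<Psi> (qs (Suc k)) - \<Psi> (qs k))" by (rule psi_diff[OF Suc])
    then show ?case by (simp add: qsS mult.commute)
  qed
  have cauchy: "pd (\<pi> ^ k) (qs (k + j) - qs k)" for k j
  proof (induction j)
    case 0 show ?case by simp
  next
    case (Suc j)
    have "pd (\<pi> ^ k) (qs (Suc (k + j)) - qs (k + j))"
      by (rule pd_weaken[OF _ step]) (simp add: le_imp_power_dvd)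
    from pd_add[OF this Suc] show ?case by simp
  qed
  have cauchy2: "\<pi> ^ m dvd fps_nth (qs a) i - fps_nth (qs b) i" if "a \<ge> m" "b \<ge> m" for m a b i
  proof -
    have "pd (\<pi> ^ m) (qs a - qs m)" using cauchy[of m "a - m"] that by simp
    moreover have "pd (\<pi> ^ m) (qs b - qs m)" using cauchy[of m "b - m"] that by simp
    ultimately have "pd (\<pi> ^ m) ((qs a - qs m) - (qs b - qs m))" by (rule pd_diff)
    then show ?thesis unfolding pd_def by simp
  qed
  have exlim: "\<exists>L. padic_lim \<pi> (\<lambda>n. fps_nth (qs n) i) L" for i
  proof -
    have C: "\<forall>s. (\<forall>m. \<exists>N. \<forall>i\<ge>N. \<forall>j\<ge>N. \<pi> ^ m dvd (s i - s j)) \<longrightarrow> (\<exists>l. padic_lim \<pi> s l)"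
      using R unfolding padic_int_ring_def by blast
    have "\<forall>m. \<exists>N. \<forall>a\<ge>N. \<forall>b\<ge>N. \<pi> ^ m dvd (fps_nth (qs a) i - fps_nth (qs b) i)"
    proof
      fix m show "\<exists>N. \<forall>a\<ge>N. \<forall>b\<ge>N. \<pi> ^ m dvd (fps_nth (qs a) i - fps_nth (qs b) i)"
        by (rule exI[of _ m]) (auto intro: cauchy2)
    qed
    then show ?thesis using C[rule_format, of "\<lambda>n. fps_nth (qs n) i"] by simp
  qed
  define Q where "Q = Abs_fps (\<lambda>i. SOME L. padic_lim \<pi> (\<lambda>n. fps_nth (qs n) i) L)"
  have Qlim: "padic_lim \<pi> (\<lambda>n. fps_nth (qs n) i) (fps_nth Q i)" for i
    unfolding Q_def using someI_ex[OF exlim] by simp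
  have Qclose: "pd (\<pi> ^ k) (Q - qs k)" for k
    unfolding pd_def
  proof
    fix i
    obtain N where N: "\<forall>n\<ge>N. \<pi> ^ k dvd fps_nth (qs n) i - fps_nth Q i"
      using Qlim[of i] unfolding padic_lim_def by blast
    define n where "n = max N k"
    have a: "\<pi> ^ k dvd fps_nth (qs n) i - fps_nth Q i" using N n_def by simp
    have b: "\<pi> ^ k dvd fps_nth (qs n) i - fps_nth (qs k) i" by (rule cauchy2) (simp_all add: n_def)
    have "\<pi> ^ k dvd (fps_nth (qs n) i - fps_nth (qs k) i) - (fps_nth (qs n) i - fps_nth Q i)"
      using a b by (rule dvd_diff[rotated])
    then show "\<pi> ^ k dvd fps_nth (Q - qs k) i" by simp
  qed
  have Qfix: "\<Psi> Q = Q"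
  proof -
    have "pd (\<pi> ^ m) (\<Psi> Q - Q)" for m
    proof (cases m)
      case 0 then show ?thesis by simp
    next
      case (Suc k)
      have 1: "pd (\<pi> ^ k * \<pi>) (\<Psi> Q - \<Psi> (qs k))" by (rule psi_diff[OF Qclose])
      have 2: "pd (\<pi> ^ Suc k) (qs (Suc k) - Q)" using pd_minus[OF Qclose[of "Suc k"]] by simp
      have "pd (\<pi> ^ Suc k) ((\<Psi> Q - \<Psi> (qs k)) + (qs (Suc k) - Q))"
        using 1 2 by (intro pd_add) (simp_all add: mult.commute)
      then show ?thesis using Suc by (simp add: qsS)
    qed
    then have "\<Psi> Q - Q = 0" by (rule pd_R_zero[OF R])
    then show ?thesis by simp
  qed
  have "U * Q = U * \<Psi> Q" using Qfix by simp
  also have "\<dots> = (U * V) * (1 - fps_shift l (Q * P))" unfolding \<Psi>_def by (simp add: mult.assoc)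
  finally have UQ: "U * Q = 1 - fps_shift l (Q * P)" using UV by simp
  define G where "G = Q * F"
  have G: "G = Q * P + fps_X ^ l * (1 - fps_shift l (Q * P))"
  proof -
    have "Q * F = Q * P + fps_X ^ l * (U * Q)" by (subst FPU) (simp add: algebra_simps)
    then show ?thesis unfolding G_def UQ .
  qed
  have pdQP: "pd \<pi> (Q * P)" using pd_mult_left[OF pdP] .
  have Gnth: "fps_nth G i = (if i < l then fps_nth (Q*P) i else if i = l then 1 else 0)" for i
    unfolding G by (simp add: fps_X_power_mult_nth)
  define g where "g = monom 1 l + Poly (map (\<lambda>i. fps_nth (Q*P) i) [0..<l])"
  have cg: "coeff g i = (if i < l then fps_nth (Q*P) i else if i = l then 1 else 0)" for i
    unfolding g_def by (auto simp: coeff_monom nth_default_def)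
  have Gg: "fps_of_poly g = G" by (rule fps_ext) (simp add: cg Gnth)
  have dg: "degree g = l"
  proof (rule antisym)
    show "degree g \<le> l" by (rule degree_le) (simp add: cg)
    show "l \<le> degree g" by (rule le_degree) (simp add: cg)
  qed
  have lc: "lead_coeff g = 1" using dg cg by simp
  have lowg: "\<forall>i<l. \<pi> dvd coeff g i" using pdQP cg unfolding pd_def by simp
  obtain y where y: "fps_nth (Q * P) l = \<pi> * y" using pdQP unfolding pd_def by (meson dvdE)
  have "fps_nth (U * Q) 0 = 1 - \<pi> * y" using UQ y by simp
  then have "fps_nth U 0 * fps_nth Q 0 dvd 1"
    using R_one_minus[OF R, of 1 y] by (simp add: fps_mult_nth)
  then have "fps_nth Q 0 dvd 1" by (rule dvd_mult_right)
  then have "Q dvd 1" by (rule fps_unit_ex)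
  then obtain W where "1 = Q * W" by (rule dvdE)
  then have QW: "Q * W = 1" by simp
  have "W * (Q * F) = (Q * W) * F" by (simp add: algebra_simps)
  then have "F = fps_of_poly g * W" unfolding Gg G_def using QW by (simp add: mult.commute)
  moreover have "W dvd 1" using QW by (metis dvdI mult.commute)
  ultimately show ?thesis using dg lc lowg by blast
qed

lemma weier_exists:
  fixes \<pi> :: "'r::{idom,ring_char_0}" and f :: "'r fps"
  assumes R: "padic_int_ring p \<pi>" and nz: "f \<noteq> 0"
  shows "\<exists>m l. weier_fact \<pi> f m l"
proof -
  obtain i0 where i0: "fps_nth f i0 \<noteq> 0" using nz by (metis fps_ext fps_zero_nth)
  obtain M where M: "\<not> \<pi> ^ M dvd fps_nth f i0" using R_zero[OF R] i0 by blast
  define S where "S = {n. \<forall>i. \<pi> ^ n dvd fps_nth f i}"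
  have Sb: "S \<subseteq> {..<M}"
  proof
    fix n assume "n \<in> S"
    then have "\<pi> ^ n dvd fps_nth f i0" unfolding S_def by blast
    then show "n \<in> {..<M}" using M by (metis lessThan_iff not_less le_imp_power_dvd dvd_trans)
  qed
  have finS: "finite S" using Sb finite_subset by blast
  have "0 \<in> S" unfolding S_def by simp
  define m where "m = Max S"
  have mS: "m \<in> S" unfolding m_def using finS \<open>0 \<in> S\<close> by (intro Max_in) auto
  have "Suc m \<notin> S" using Max_ge[OF finS] m_def by fastforce
  then obtain i1 where i1: "\<not> \<pi> ^ Suc m dvd fps_nth f i1" unfolding S_def by blast
  have ex: "\<exists>y. fps_nth f i = \<pi> ^ m * y" for i using mS unfolding S_def by (simp add: dvd_def)
  define F where "F = Abs_fps (\<lambda>i. SOME y. fps_nth f i = \<pi> ^ m * y)"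
  have Fn: "fps_nth f i = \<pi> ^ m * fps_nth F i" for i
    unfolding F_def using someI_ex[OF ex[of i]] by simp
  have fF: "f = fps_const (\<pi> ^ m) * F" by (rule fps_ext) (simp add: Fn)
  have exl: "\<exists>i. \<not> \<pi> dvd fps_nth F i"
  proof (rule ccontr)
    assume "\<not> ?thesis"
    then have "\<pi> dvd fps_nth F i1" by blast
    then have "\<pi> ^ Suc m dvd fps_nth f i1" by (simp add: Fn mult_dvd_mono mult.commute)
    then show False using i1 by blast
  qed
  define l where "l = (LEAST i. \<not> \<pi> dvd fps_nth F i)"
  have Fl: "\<not> \<pi> dvd fps_nth F l" unfolding l_def by (rule LeastI_ex[OF exl])
  have Flow: "\<pi> dvd fps_nth F i" if "i < l" for i using not_less_Least[OF that[unfolded l_def]] by blast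
  obtain g u where gu: "degree g = l" "lead_coeff g = 1" "\<forall>i<l. \<pi> dvd coeff g i" "u dvd 1"
     "F = fps_of_poly g * u"
    using weier_prep[OF R Flow R_unit[OF R Fl]] by blast
  have "f = fps_const (\<pi> ^ m) * fps_of_poly g * u" using gu(5) fF by (simp add: mult.assoc)
  then have "weier_fact \<pi> f m l" unfolding weier_fact_def
    using gu(1-4) by blast
  then show ?thesis by blast
qed


lemma DL_finite: "finite (digit_lists p n)"
proof -
  have "digit_lists p n = {xs. set xs \<subseteq> {..<p} \<and> length xs = n}" unfolding digit_lists_def by auto
  then show ?thesis using finite_lists_length_eq[of "{..<p}" n] by simp
qed

lemma DL_0: "digit_lists p 0 = {[]}" unfolding digit_lists_def by auto

lemma DL_Suc: "digit_lists p (Suc n) = (\<lambda>(a,b). a @ [b]) ` (digit_lists p n \<times> {..<p})"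
proof
  show "digit_lists p (Suc n) \<subseteq> (\<lambda>(a,b). a @ [b]) ` (digit_lists p n \<times> {..<p})"
  proof
    fix x assume x: "x \<in> digit_lists p (Suc n)"
    then have "x \<noteq> []" unfolding digit_lists_def by auto
    then obtain a b where ab: "x = a @ [b]" by (metis rev_exhaust)
    then show "x \<in> (\<lambda>(a,b). a @ [b]) ` (digit_lists p n \<times> {..<p})"
      using x unfolding digit_lists_def by (auto intro!: image_eqI[of _ _ "(a,b)"])
  qed
  show "(\<lambda>(a,b). a @ [b]) ` (digit_lists p n \<times> {..<p}) \<subseteq> digit_lists p (Suc n)"
    unfolding digit_lists_def by auto
qed

lemma DL_sum_Suc:
  "(\<Sum>a\<in>digit_lists p (Suc n). F a) = (\<Sum>a\<in>digit_lists p n. \<Sum>b<p. F (a @ [b]))"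
proof -
  have inj: "inj_on (\<lambda>(a,b). a @ [b]) (digit_lists p n \<times> {..<p})"
    by (auto simp: inj_on_def)
  have "(\<Sum>a\<in>digit_lists p (Suc n). F a) = (\<Sum>x\<in>digit_lists p n \<times> {..<p}. F ((\<lambda>(a,b). a @ [b]) x))"
    unfolding DL_Suc by (rule sum.reindex[OF inj, unfolded comp_def])
  also have "\<dots> = (\<Sum>a\<in>digit_lists p n. \<Sum>b<p. F (a @ [b]))"
    unfolding sum.cartesian_product by (intro sum.cong) auto
  finally show ?thesis .
qed

lemma digval_snoc: "digval p (a @ [b]) = digval p a + b * p ^ length a"
  unfolding digval_def by (simp add: nth_append)

lemma digval_bound: "a \<in> digit_lists p n \<Longrightarrow> digval p a < p ^ n"
proof (induction a arbitrary: n rule: rev_induct)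
  case Nil then show ?case by (simp add: digit_lists_def digval_def)
next
  case (snoc b a)
  then have n: "n = Suc (length a)" and bp: "b < p" and aD: "a \<in> digit_lists p (length a)"
    unfolding digit_lists_def by auto
  have "digval p a < p ^ length a" using snoc.IH[OF aD] .
  then have "digval p a + b * p ^ length a < p ^ length a + b * p ^ length a" by simp
  also have "\<dots> \<le> p * p ^ length a"
    using bp by (metis add.commute less_eq_Suc_le mult_Suc mult_le_mono1)
  finally show ?case by (simp add: digval_snoc n)
qed

lemma riemann_eq:
  fixes \<nu> :: "nat list \<Rightarrow> 'r::comm_ring_1"
  shows "(\<Sum>c<p ^ n. dig_push p \<nu> n c * of_nat (c choose k))
       = (\<Sum>a\<in>digit_lists p n. \<nu> a * of_nat (digval p a choose k))"
proof -
  have "(\<Sum>c<p ^ n. dig_push p \<nu> n c * of_nat (c choose k))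
      = (\<Sum>c<p ^ n. \<Sum>a\<in>{a \<in> digit_lists p n. digval p a = c}. \<nu> a * of_nat (digval p a choose k))"
    unfolding dig_push_def sum_distrib_right by (intro sum.cong refl) auto
  also have "\<dots> = (\<Sum>a\<in>digit_lists p n. \<nu> a * of_nat (digval p a choose k))"
    by (rule sum.group) (auto simp: DL_finite digval_bound)
  finally show ?thesis .
qed

lemma total_mass_n:
  assumes nu: "is_dig_measure p \<nu>"
  shows "(\<Sum>a\<in>digit_lists p n. \<nu> a) = \<nu> []"
proof (induction n)
  case 0 then show ?case by (simp add: DL_0)
next
  case (Suc n)
  have "(\<Sum>a\<in>digit_lists p (Suc n). \<nu> a) = (\<Sum>a\<in>digit_lists p n. \<Sum>b<p. \<nu> (a @ [b]))"
    by (rule DL_sum_Suc)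
  also have "\<dots> = (\<Sum>a\<in>digit_lists p n. \<nu> a)"
    using nu unfolding is_dig_measure_def by (intro sum.cong refl) auto
  finally show ?case using Suc by simp
qed

definition S1 :: "nat \<Rightarrow> (nat list \<Rightarrow> 'r::comm_ring_1) \<Rightarrow> nat \<Rightarrow> 'r" where
  "S1 p \<nu> n = (\<Sum>a\<in>digit_lists p n. \<nu> a * of_nat (digval p a))"

lemma S1_step:
  assumes nu: "is_dig_measure p \<nu>"
  shows "S1 p \<nu> (Suc n) - S1 p \<nu> n = of_nat (p ^ n) * (\<Sum>a\<in>digit_lists p n. \<Sum>b<p. \<nu> (a @ [b]) * of_nat b)"
proof -
  have len: "length a = n" if "a \<in> digit_lists p n" for a using that unfolding digit_lists_def by simp
  have "S1 p \<nu> (Suc n) = (\<Sum>a\<in>digit_lists p n. \<Sum>b<p. \<nu> (a @ [b]) * of_nat (digval p a + b * p ^ n))"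
    unfolding S1_def DL_sum_Suc by (intro sum.cong refl) (simp add: digval_snoc len)
  also have "\<dots> = (\<Sum>a\<in>digit_lists p n. of_nat (digval p a) * (\<Sum>b<p. \<nu> (a @ [b])))
      + of_nat (p ^ n) * (\<Sum>a\<in>digit_lists p n. \<Sum>b<p. \<nu> (a @ [b]) * of_nat b)"
    by (simp add: algebra_simps sum.distrib sum_distrib_left sum_distrib_right)
  also have "(\<Sum>a\<in>digit_lists p n. of_nat (digval p a) * (\<Sum>b<p. \<nu> (a @ [b]))) = S1 p \<nu> n"
    unfolding S1_def using nu unfolding is_dig_measure_def by (intro sum.cong refl) (auto simp: mult.commute)
  finally show ?thesis by simp
qed

lemma S1_cauchy:
  fixes \<pi> :: "'r::comm_ring_1"
  assumes nu: "is_dig_measure p \<nu>" and pp: "\<pi> dvd of_nat p"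
  shows "\<pi> ^ m dvd S1 p \<nu> (m + j) - S1 p \<nu> m"
proof (induction j)
  case 0 then show ?case by simp
next
  case (Suc j)
  have "\<pi> ^ (m + j) dvd of_nat (p ^ (m + j))" using pp by (simp add: of_nat_power dvd_power_same)
  then have "\<pi> ^ m dvd of_nat (p ^ (m + j))" by (meson dvd_trans le_add1 le_imp_power_dvd)
  then have "\<pi> ^ m dvd S1 p \<nu> (Suc (m + j)) - S1 p \<nu> (m + j)"
    unfolding S1_step[OF nu] by simp
  from dvd_add[OF this Suc] show ?case by simp
qed

lemma padic_lim_unique:
  fixes \<pi> :: "'r::{idom,ring_char_0}"
  assumes R: "padic_int_ring p \<pi>" and "padic_lim \<pi> s L1" "padic_lim \<pi> s L2"
  shows "L1 = L2"
proof -
  have "\<pi> ^ m dvd L1 - L2" for m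
  proof -
    obtain N1 where N1: "\<forall>n\<ge>N1. \<pi> ^ m dvd s n - L1" using assms(2) unfolding padic_lim_def by blast
    obtain N2 where N2: "\<forall>n\<ge>N2. \<pi> ^ m dvd s n - L2" using assms(3) unfolding padic_lim_def by blast
    have a: "\<pi> ^ m dvd s (max N1 N2) - L1" and b: "\<pi> ^ m dvd s (max N1 N2) - L2" using N1 N2 by auto
    have "\<pi> ^ m dvd (s (max N1 N2) - L2) - (s (max N1 N2) - L1)" using a b by (rule dvd_diff[rotated])
    then show ?thesis by simp
  qed
  then show ?thesis using R_zero[OF R, of "L1 - L2"] by simp
qed

lemma amice_coeff_eq:
  fixes \<pi> :: "'r::{idom,ring_char_0}"
  assumes R: "padic_int_ring p \<pi>" and "padic_lim \<pi> (\<lambda>n. \<Sum>c<p ^ n. \<mu> n c * of_nat (c choose k)) L"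
  shows "amice_coeff \<pi> p \<mu> k = L"
  unfolding amice_coeff_def using assms padic_lim_unique[OF R] by (intro the_equality) blast+

lemma amice0:
  fixes \<pi> :: "'r::{idom,ring_char_0}"
  assumes R: "padic_int_ring p \<pi>" and nu: "is_dig_measure p \<nu>"
  shows "amice_coeff \<pi> p (dig_push p \<nu>) 0 = \<nu> []"
proof (rule amice_coeff_eq[OF R])
  show "padic_lim \<pi> (\<lambda>n. \<Sum>c<p ^ n. dig_push p \<nu> n c * of_nat (c choose 0)) (\<nu> [])"
    unfolding padic_lim_def riemann_eq using total_mass_n[OF nu] by simp
qed

lemma amice1:
  fixes \<pi> :: "'r::{idom,ring_char_0}"
  assumes R: "padic_int_ring p \<pi>" and nu: "is_dig_measure p \<nu>"
  shows "\<pi> dvd amice_coeff \<pi> p (dig_push p \<nu>) 1 - S1 p \<nu> 1"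
proof -
  have pp: "\<pi> dvd of_nat p" using R unfolding padic_int_ring_def by blast
  have C: "\<forall>s. (\<forall>m. \<exists>N. \<forall>i\<ge>N. \<forall>j\<ge>N. \<pi> ^ m dvd (s i - s j)) \<longrightarrow> (\<exists>l. padic_lim \<pi> s l)"
    using R unfolding padic_int_ring_def by blast
  have cs: "\<pi> ^ m dvd S1 p \<nu> a - S1 p \<nu> b" if "a \<ge> m" "b \<ge> m" for m a b
  proof -
    have "\<pi> ^ m dvd S1 p \<nu> a - S1 p \<nu> m" using S1_cauchy[OF nu pp, of m "a - m"] that by simp
    moreover have "\<pi> ^ m dvd S1 p \<nu> b - S1 p \<nu> m" using S1_cauchy[OF nu pp, of m "b - m"] that by simp
    ultimately have "\<pi> ^ m dvd (S1 p \<nu> a - S1 p \<nu> m) - (S1 p \<nu> b - S1 p \<nu> m)" by (rule dvd_diff)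
    then show ?thesis by simp
  qed
  have "\<forall>m. \<exists>N. \<forall>a\<ge>N. \<forall>b\<ge>N. \<pi> ^ m dvd (S1 p \<nu> a - S1 p \<nu> b)"
  proof
    fix m show "\<exists>N. \<forall>a\<ge>N. \<forall>b\<ge>N. \<pi> ^ m dvd (S1 p \<nu> a - S1 p \<nu> b)"
      by (rule exI[of _ m]) (auto intro: cs)
  qed
  then obtain L where L: "padic_lim \<pi> (S1 p \<nu>) L" using C[rule_format, of "S1 p \<nu>"] by blast
  have "(\<lambda>n. \<Sum>c<p ^ n. dig_push p \<nu> n c * of_nat (c choose 1)) = S1 p \<nu>"
    unfolding riemann_eq S1_def by simp
  then have eq: "amice_coeff \<pi> p (dig_push p \<nu>) 1 = L" using amice_coeff_eq[OF R] L by metis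
  obtain N where N: "\<forall>n\<ge>N. \<pi> ^ 1 dvd S1 p \<nu> n - L" using L unfolding padic_lim_def by blast
  have a: "\<pi> dvd S1 p \<nu> (max N 1) - L" using N by simp
  have b: "\<pi> dvd S1 p \<nu> (max N 1) - S1 p \<nu> 1" using cs[of 1 "max N 1" 1] by simp
  have "\<pi> dvd (S1 p \<nu> (max N 1) - S1 p \<nu> 1) - (S1 p \<nu> (max N 1) - L)" using a b by (rule dvd_diff[rotated])
  then show ?thesis using eq by simp
qed

lemma S1_one: "S1 p \<nu> 1 = (\<Sum>b<p. \<nu> [b] * of_nat b)"
  unfolding S1_def using DL_sum_Suc[where p=p and n=0 and F="\<lambda>a. \<nu> a * of_nat (digval p a)"]
  by (simp add: DL_0 digval_def)

lemma D_S1: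
  fixes \<nu> :: "nat list \<Rightarrow> 'r::comm_ring_1"
  assumes "p > 0"
  shows "dig_D p \<nu> - S1 p \<nu> 1 = of_nat p * \<nu> [0]"
proof -
  have a: "dig_D p \<nu> = (\<Sum>a\<in>{1..<p}. of_nat a * \<nu> [a]) + of_nat p * \<nu> [0]"
  proof -
    have "{1..p} = insert p {1..<p}" using assms by auto
    then have "dig_D p \<nu> = of_nat p * \<nu> [p mod p] + (\<Sum>a\<in>{1..<p}. of_nat a * \<nu> [a mod p])"
      unfolding dig_D_def by simp
    also have "(\<Sum>a\<in>{1..<p}. of_nat a * \<nu> [a mod p]) = (\<Sum>a\<in>{1..<p}. of_nat a * \<nu> [a])"
      by (intro sum.cong refl) simp
    finally show ?thesis by simp
  qed
  have b: "S1 p \<nu> 1 = (\<Sum>a\<in>{1..<p}. of_nat a * \<nu> [a])"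
  proof -
    have "S1 p \<nu> 1 = (\<Sum>b\<in>{0..<p}. \<nu> [b] * of_nat b)" unfolding S1_one by (simp add: atLeast0LessThan)
    also have "\<dots> = (\<Sum>b\<in>{Suc 0..<p}. \<nu> [b] * of_nat b)" using assms by (simp add: sum.atLeast_Suc_lessThan)
    finally show ?thesis by (simp add: mult.commute)
  qed
  show ?thesis using a b by simp
qed


theorem corollary4p2:
  fixes p :: nat and \<pi> :: "'r::{idom,ring_char_0}" and \<nu> :: "nat list \<Rightarrow> 'r"
  assumes R: "padic_int_ring p \<pi>"
    and nu: "is_dig_measure p \<nu>"
  defines "f \<equiv> amice \<pi> p (dig_push p \<nu>)"
  shows "(total_mass \<nu> dvd 1 \<longleftrightarrow> weier_mu \<pi> f = 0 \<and> weier_lambda \<pi> f = 0)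
       \<and> ((\<not> total_mass \<nu> dvd 1 \<and> dig_D p \<nu> dvd 1)
            \<longleftrightarrow> weier_mu \<pi> f = 0 \<and> weier_lambda \<pi> f = 1)"
proof -
  have pp: "\<pi> dvd of_nat p" and pr: "prime p" using R unfolding padic_int_ring_def by blast+
  then have p0: "p > 0" by (simp add: prime_gt_0_nat)
  have nonu: "\<not> \<pi> dvd 1" using R_nonunit[OF R] .
  have f0: "fps_nth f 0 = total_mass \<nu>"
    unfolding f_def amice_def total_mass_def using amice0[OF R nu] by simp
  have f1D: "\<pi> dvd fps_nth f 1 - dig_D p \<nu>"
  proof -
    have a: "\<pi> dvd fps_nth f 1 - S1 p \<nu> 1"
      unfolding f_def amice_def using amice1[OF R nu] by simp
    have b: "\<pi> dvd dig_D p \<nu> - S1 p \<nu> 1" unfolding D_S1[OF p0] using pp by simp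
    have "\<pi> dvd (fps_nth f 1 - S1 p \<nu> 1) - (dig_D p \<nu> - S1 p \<nu> 1)" using a b by (rule dvd_diff)
    then show ?thesis by simp
  qed
  have f1iff: "\<pi> dvd fps_nth f 1 \<longleftrightarrow> \<pi> dvd dig_D p \<nu>"
  proof
    assume "\<pi> dvd fps_nth f 1"
    from dvd_diff[OF this f1D] show "\<pi> dvd dig_D p \<nu>" by simp
  next
    assume "\<pi> dvd dig_D p \<nu>"
    from dvd_add[OF f1D this] show "\<pi> dvd fps_nth f 1" by simp
  qed
  have unit_iff: "x dvd 1 \<longleftrightarrow> \<not> \<pi> dvd x" for x
    using R_unit[OF R, of x] nonu dvd_trans by blast
  have mu0: "weier_mu \<pi> f = 0 \<Longrightarrow> \<exists>l. weier_fact \<pi> f 0 l \<and> weier_lambda \<pi> f = l"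
  proof -
    assume h: "weier_mu \<pi> f = 0"
    then have nz: "f \<noteq> 0" by (auto simp: weier_mu_def)
    obtain m l where W: "weier_fact \<pi> f m l" using weier_exists[OF R nz] by blast
    from weier_values[OF R W nz] h show ?thesis using W by (auto simp: zero_enat_def)
  qed
  have getW: "\<exists>m l. weier_fact \<pi> f m l \<and> weier_mu \<pi> f = enat m \<and> weier_lambda \<pi> f = l" if nz: "f \<noteq> 0"
  proof -
    obtain m l where W: "weier_fact \<pi> f m l" using weier_exists[OF R nz] by blast
    then show ?thesis using weier_values[OF R W nz] by blast
  qed
  have part1: "total_mass \<nu> dvd 1 \<longleftrightarrow> weier_mu \<pi> f = 0 \<and> weier_lambda \<pi> f = 0"
  proof
    assume t: "total_mass \<nu> dvd 1"
    then have nd: "\<not> \<pi> dvd fps_nth f 0" using f0 unit_iff by simp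
    then have "f \<noteq> 0" by auto
    then obtain m l where W: "weier_fact \<pi> f m l" and v: "weier_mu \<pi> f = enat m" "weier_lambda \<pi> f = l"
      using getW by blast
    note c = weier_char[OF R W]
    have "m = 0"
    proof (rule ccontr)
      assume "m \<noteq> 0"
      then have "\<pi> dvd \<pi> ^ m" by (simp add: dvd_power)
      then show False using c nd dvd_trans by blast
    qed
    moreover have "l = 0"
    proof (rule ccontr)
      assume "l \<noteq> 0"
      then have "\<pi> ^ (m+1) dvd fps_nth f 0" using c by blast
      then show False using nd \<open>m = 0\<close> by simp
    qed
    ultimately show "weier_mu \<pi> f = 0 \<and> weier_lambda \<pi> f = 0" using v by (simp add: zero_enat_def)
  next
    assume h: "weier_mu \<pi> f = 0 \<and> weier_lambda \<pi> f = 0"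
    obtain l where "weier_fact \<pi> f 0 l" "weier_lambda \<pi> f = l" using mu0 h by blast
    then have W: "weier_fact \<pi> f 0 0" using h by simp
    then have "\<not> \<pi> dvd fps_nth f 0" using weier_char[OF R W] by simp
    then show "total_mass \<nu> dvd 1" using f0 unit_iff by simp
  qed
  have part2: "(\<not> total_mass \<nu> dvd 1 \<and> dig_D p \<nu> dvd 1) \<longleftrightarrow> weier_mu \<pi> f = 0 \<and> weier_lambda \<pi> f = 1"
  proof
    assume h: "\<not> total_mass \<nu> dvd 1 \<and> dig_D p \<nu> dvd 1"
    then have d0: "\<pi> dvd fps_nth f 0" and nd1: "\<not> \<pi> dvd fps_nth f 1"
      using f0 unit_iff f1iff by auto
    then have "f \<noteq> 0" by auto
    then obtain m l where W: "weier_fact \<pi> f m l" and v: "weier_mu \<pi> f = enat m" "weier_lambda \<pi> f = l"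
      using getW by blast
    note c = weier_char[OF R W]
    have m0: "m = 0"
    proof (rule ccontr)
      assume "m \<noteq> 0"
      then have "\<pi> dvd \<pi> ^ m" by (simp add: dvd_power)
      then show False using c nd1 dvd_trans by blast
    qed
    have "l \<noteq> 0"
    proof
      assume "l = 0" then show False using c d0 m0 by simp
    qed
    moreover have "\<not> l > 1"
    proof
      assume "l > 1"
      then have "\<pi> ^ (m+1) dvd fps_nth f 1" using c by blast
      then show False using nd1 m0 by simp
    qed
    ultimately have "l = 1" by simp
    then show "weier_mu \<pi> f = 0 \<and> weier_lambda \<pi> f = 1" using v m0 by (simp add: zero_enat_def)
  next
    assume h: "weier_mu \<pi> f = 0 \<and> weier_lambda \<pi> f = 1"
    obtain l where "weier_fact \<pi> f 0 l" "weier_lambda \<pi> f = l" using mu0 h by blast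
    then have W: "weier_fact \<pi> f 0 1" using h by simp
    note c = weier_char[OF R W]
    have "\<pi> dvd fps_nth f 0" and "\<not> \<pi> dvd fps_nth f 1" using c by auto
    then show "\<not> total_mass \<nu> dvd 1 \<and> dig_D p \<nu> dvd 1" using f0 unit_iff f1iff by auto
  qed
  show ?thesis using part1 part2 by blast
qed

end
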